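(* Let $P$ be a distribution on $\mathcal{X}$, $R>0$, $K>0$. Then \[ \lim_{\epsilon\searrow 0^{+}} E_e(P,R,K,\epsilon)=E_e(P,R,K,0), \] where for $\epsilon\in\mathbb{R}$, $E_e(P,R,K,\epsilon)=\min\{E_1(P,R,K,\epsilon),E_2(P,R,K,\epsilon)\}$ with \[ E_1(P,R,K,\epsilon)=\min_{TV\widetilde{V}:\; B_{T\widetilde{V}}\le B_{TV}+\epsilon\le K} F(TV,T\widetilde{V}),\qquad E_2(P,R,K,\epsilon)=\min_{TV\widetilde{V}:\; B_{TV}+\epsilon\ge K} F(TV,T\widetilde{V}), \] \[ F(TV,T\widetilde{V})=D(TV\|PW)+\big|A_{T\widetilde{V}}-R+|B_{T\widetilde{V}}-K|^{+}\big|^{+}. \]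
   Context: $\mathcal{X},\mathcal{Y}$ are finite alphabets and $W(y|x)$ is a conditional distribution of $y\in\mathcal{Y}$ given $x\in\mathcal{X}$. Logs are natural. $TV$, $T\widetilde{V}$ denote joint distributions on $\mathcal{Y}\times\mathcal{X}$ with common $\mathcal{Y}$-marginal $T$ and conditionals $V(x|y)$, $\widetilde{V}(x|y)$; minima are over all such triples (the minimum over an empty set is $+\infty$). $PW$ is the joint distribution $P(x)W(y|x)$; $D(TV\|PW)=\sum T(y)V(x|y)\log\frac{T(y)V(x|y)}{P(x)W(y|x)}$; $A_{TV}=\sum T(y)V(x|y)\log\frac{V(x|y)}{P(x)}$; $B_{TV}=\mathbb{E}_{TV}[-\log W(Y|X)]$; $|t|^{+}=\max\{0,t\}$. *)

theory Defs
  imports "HOL-Analysis.Analysis"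
begin

definition is_dist :: "('a::finite \<Rightarrow> real) \<Rightarrow> bool" where
  "is_dist p \<longleftrightarrow> (\<forall>a. 0 \<le> p a) \<and> (\<Sum>a\<in>UNIV. p a) = 1"

text \<open>Conditional distributions: for every b, V b is a distribution (V b a = V(a|b)).\<close>
definition is_cond :: "('b \<Rightarrow> 'a::finite \<Rightarrow> real) \<Rightarrow> bool" where
  "is_cond V \<longleftrightarrow> (\<forall>b. is_dist (V b))"

text \<open>Joint TV(y,x) = T y * V y x, channel W x y = W(y|x), P x = P(x).
  Conventions: 0 log(0/.) = 0, q log(q/0) = +infinity for q > 0.\<close>

definition Dterm :: "('y::finite \<Rightarrow> real) \<Rightarrow> ('y \<Rightarrow> 'x::finite \<Rightarrow> real)
    \<Rightarrow> ('x \<Rightarrow> real) \<Rightarrow> ('x \<Rightarrow> 'y \<Rightarrow> real) \<Rightarrow> ereal" where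
  "Dterm T V P W = (\<Sum>y\<in>UNIV. \<Sum>x\<in>UNIV.
     (let q = T y * V y x; p = P x * W x y in
      if q = 0 then 0 else if p = 0 then \<infinity> else ereal (q * ln (q / p))))"

definition Aterm :: "('y::finite \<Rightarrow> real) \<Rightarrow> ('y \<Rightarrow> 'x::finite \<Rightarrow> real)
    \<Rightarrow> ('x \<Rightarrow> real) \<Rightarrow> ereal" where
  "Aterm T V P = (\<Sum>y\<in>UNIV. \<Sum>x\<in>UNIV.
     (let q = T y * V y x in
      if q = 0 then 0 else if P x = 0 then \<infinity> else ereal (q * ln (V y x / P x))))"

definition Bterm :: "('y::finite \<Rightarrow> real) \<Rightarrow> ('y \<Rightarrow> 'x::finite \<Rightarrow> real)
    \<Rightarrow> ('x \<Rightarrow> 'y \<Rightarrow> real) \<Rightarrow> ereal" where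
  "Bterm T V W = (\<Sum>y\<in>UNIV. \<Sum>x\<in>UNIV.
     (let q = T y * V y x in
      if q = 0 then 0 else if W x y = 0 then \<infinity> else ereal (q * (- ln (W x y)))))"

definition pospart :: "ereal \<Rightarrow> ereal" where
  "pospart t = max 0 t"

definition Ffun :: "('x \<Rightarrow> real) \<Rightarrow> ('x::finite \<Rightarrow> 'y::finite \<Rightarrow> real) \<Rightarrow> real \<Rightarrow> real
    \<Rightarrow> ('y \<Rightarrow> real) \<Rightarrow> ('y \<Rightarrow> 'x \<Rightarrow> real) \<Rightarrow> ('y \<Rightarrow> 'x \<Rightarrow> real) \<Rightarrow> ereal" where
  "Ffun P W R K T V V' = Dterm T V P W
      + pospart (Aterm T V' P - ereal R + pospart (Bterm T V' W - ereal K))"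

definition E1 :: "('x::finite \<Rightarrow> real) \<Rightarrow> ('x \<Rightarrow> 'y::finite \<Rightarrow> real) \<Rightarrow> real \<Rightarrow> real \<Rightarrow> real \<Rightarrow> ereal" where
  "E1 P W R K \<epsilon> = (INF tvv \<in> {(T, V, V'). is_dist T \<and> is_cond V \<and> is_cond V'
        \<and> Bterm T V' W \<le> Bterm T V W + ereal \<epsilon> \<and> Bterm T V W + ereal \<epsilon> \<le> ereal K}.
      (case tvv of (T, V, V') \<Rightarrow> Ffun P W R K T V V'))"

definition E2 :: "('x::finite \<Rightarrow> real) \<Rightarrow> ('x \<Rightarrow> 'y::finite \<Rightarrow> real) \<Rightarrow> real \<Rightarrow> real \<Rightarrow> real \<Rightarrow> ereal" where
  "E2 P W R K \<epsilon> = (INF tvv \<in> {(T, V, V'). is_dist T \<and> is_cond V \<and> is_cond V'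
        \<and> Bterm T V W + ereal \<epsilon> \<ge> ereal K}.
      (case tvv of (T, V, V') \<Rightarrow> Ffun P W R K T V V'))"

definition Ee :: "('x::finite \<Rightarrow> real) \<Rightarrow> ('x \<Rightarrow> 'y::finite \<Rightarrow> real) \<Rightarrow> real \<Rightarrow> real \<Rightarrow> real \<Rightarrow> ereal" where
  "Ee P W R K \<epsilon> = min (E1 P W R K \<epsilon>) (E2 P W R K \<epsilon>)"

end

theory Submission imports Defs "HOL-Real_Asymp.Real_Asymp" begin

lemma fin_subseq_aux:
  fixes f :: "nat \<Rightarrow> 'a \<Rightarrow> real"
  assumes "\<And>n a. f n a \<in> {0..1}" "finite A"
  shows "\<exists>r l. strict_mono r \<and> (\<forall>a\<in>A. (\<lambda>n. f (r n) a) \<longlonglongrightarrow> l a)"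
  using assms(2)
proof (induction A rule: finite_induct)
  case empty
  then show ?case by (intro exI[of _ id] exI) (auto simp: strict_mono_def)
next
  case (insert a A)
  then obtain r l where r: "strict_mono r" and l: "\<forall>a\<in>A. (\<lambda>n. f (r n) a) \<longlonglongrightarrow> l a" by blast
  have "seq_compact {0..1::real}" by (rule compact_imp_seq_compact) simp
  then obtain c s where s: "strict_mono s" "((\<lambda>n. f (r n) a) \<circ> s) \<longlonglongrightarrow> c"
    using assms(1) by (metis seq_compactE)
  show ?case
  proof (intro exI conjI ballI)
    show "strict_mono (r \<circ> s)" using r s(1) by (rule strict_mono_o)
    fix b assume "b \<in> insert a A"
    then show "(\<lambda>n. f ((r \<circ> s) n) b) \<longlonglongrightarrow> (l(a := c)) b"
    proof
      assume "b = a" then show ?thesis using s(2) \<open>a \<notin> A\<close> by (simp add: o_def)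
    next
      assume "b \<in> A"
      then have "(\<lambda>n. f (r n) b) \<longlonglongrightarrow> l b" using l by blast
      from LIMSEQ_subseq_LIMSEQ[OF this s(1)] show ?thesis using \<open>b \<in> A\<close> \<open>a \<notin> A\<close>
        by (auto simp: o_def)
    qed
  qed
qed

lemma fin_subseq:
  fixes f :: "nat \<Rightarrow> 'a::finite \<Rightarrow> real"
  assumes "\<And>n a. f n a \<in> {0..1}"
  shows "\<exists>r l. strict_mono r \<and> (\<forall>a. (\<lambda>n. f (r n) a) \<longlonglongrightarrow> l a)"
  using fin_subseq_aux[of f UNIV] assms by auto

lemma xlnx_lim0: "((\<lambda>x::real. x * ln x) \<longlongrightarrow> 0) (at_right 0)"
  by real_asymp

lemma xlnx_cont: "continuous_on {0..} (\<lambda>x::real. x * ln x)"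
  unfolding continuous_on_def
proof (intro ballI)
  fix x :: real assume x: "x \<in> {0..}"
  show "((\<lambda>x. x * ln x) \<longlongrightarrow> x * ln x) (at x within {0..})"
  proof (cases "x = 0")
    case True then show ?thesis using xlnx_lim0 by (simp add: at_within_Ici_at_right)
  next
    case False then have "x > 0" using x by simp
    then have "isCont (\<lambda>x. x * ln x) x" by (intro continuous_intros) auto
    then have "continuous (at x within {0..}) (\<lambda>x. x * ln x)"
      by (rule continuous_at_imp_continuous_at_within)
    then show ?thesis unfolding continuous_within .
  qed
qed

lemma xlnx_tendsto:
  fixes x :: "nat \<Rightarrow> real"
  assumes "x \<longlonglongrightarrow> a" "\<And>n. x n \<ge> 0"
  shows "(\<lambda>n. x n * ln (x n)) \<longlonglongrightarrow> a * ln a"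
proof -
  have "a \<ge> 0"
  proof (rule LIMSEQ_le_const[OF assms(1)])
    show "\<exists>N. \<forall>n\<ge>N. 0 \<le> x n" using assms(2) by blast
  qed
  then show ?thesis
    by (rule continuous_on_tendsto_compose[OF xlnx_cont assms(1), simplified])
      (use assms(2) in simp)
qed

lemma dist_bounds: "is_dist p \<Longrightarrow> p a \<in> {0..1}"
proof -
  assume d: "is_dist p"
  then have "p a \<le> (\<Sum>b\<in>UNIV. p b)" unfolding is_dist_def
    by (intro member_le_sum) auto
  with d show ?thesis unfolding is_dist_def by auto
qed

lemma Dterm_supp:
  assumes "Dterm T V P W \<noteq> \<infinity>" shows "T y * V y x \<noteq> 0 \<longrightarrow> P x * W x y \<noteq> 0"
proof (rule ccontr)
  assume "\<not> ?thesis"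
  then have "\<exists>x'\<in>UNIV. (let q = T y * V y x'; p = P x' * W x' y in
      if q = 0 then 0 else if p = 0 then \<infinity> else ereal (q * ln (q / p))) = \<infinity>"
    by (intro bexI[of _ x]) (auto simp: Let_def)
  then have "\<exists>y'\<in>UNIV. (\<Sum>x\<in>UNIV. (let q = T y' * V y' x; p = P x * W x y' in
      if q = 0 then 0 else if p = 0 then \<infinity> else ereal (q * ln (q / p)))) = \<infinity>"
    by (intro bexI[of _ y]) (auto simp: sum_Pinfty)
  then show False using assms unfolding Dterm_def by (simp add: sum_Pinfty)
qed

lemma Aterm_supp:
  assumes "Aterm T V P \<noteq> \<infinity>" shows "T y * V y x \<noteq> 0 \<longrightarrow> P x \<noteq> 0"
proof (rule ccontr)
  assume "\<not> ?thesis"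
  then have "\<exists>x'\<in>UNIV. (let q = T y * V y x' in
      if q = 0 then 0 else if P x' = 0 then \<infinity> else ereal (q * ln (V y x' / P x'))) = \<infinity>"
    by (intro bexI[of _ x]) (auto simp: Let_def)
  then have "\<exists>y'\<in>UNIV. (\<Sum>x\<in>UNIV. (let q = T y' * V y' x in
      if q = 0 then 0 else if P x = 0 then \<infinity> else ereal (q * ln (V y' x / P x)))) = \<infinity>"
    by (intro bexI[of _ y]) (auto simp: sum_Pinfty)
  then show False using assms unfolding Aterm_def by (simp add: sum_Pinfty)
qed

lemma Bterm_supp:
  assumes "Bterm T V W \<noteq> \<infinity>" shows "T y * V y x \<noteq> 0 \<longrightarrow> W x y \<noteq> 0"
proof (rule ccontr)
  assume "\<not> ?thesis"
  then have "\<exists>x'\<in>UNIV. (let q = T y * V y x' in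
      if q = 0 then 0 else if W x' y = 0 then \<infinity> else ereal (q * (- ln (W x' y)))) = \<infinity>"
    by (intro bexI[of _ x]) (auto simp: Let_def)
  then have "\<exists>y'\<in>UNIV. (\<Sum>x\<in>UNIV. (let q = T y' * V y' x in
      if q = 0 then 0 else if W x y' = 0 then \<infinity> else ereal (q * (- ln (W x y'))))) = \<infinity>"
    by (intro bexI[of _ y]) (auto simp: sum_Pinfty)
  then show False using assms unfolding Bterm_def by (simp add: sum_Pinfty)
qed

lemma Dterm_real:
  assumes "\<And>y x. T y * V y x \<noteq> 0 \<longrightarrow> P x * W x y \<noteq> 0"
  shows "Dterm T V P W = ereal (\<Sum>y\<in>UNIV. \<Sum>x\<in>UNIV. T y * V y x * ln (T y * V y x / (P x * W x y)))"
  unfolding Dterm_def sum_ereal[symmetric]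
  by (intro sum.cong refl) (use assms in \<open>auto simp: Let_def\<close>)

lemma Aterm_real:
  assumes "\<And>y x. T y * V y x \<noteq> 0 \<longrightarrow> P x \<noteq> 0"
  shows "Aterm T V P = ereal (\<Sum>y\<in>UNIV. \<Sum>x\<in>UNIV. T y * V y x * ln (V y x / P x))"
  unfolding Aterm_def sum_ereal[symmetric]
  by (intro sum.cong refl) (use assms in \<open>auto simp: Let_def\<close>)

lemma Bterm_real:
  assumes "\<And>y x. T y * V y x \<noteq> 0 \<longrightarrow> W x y \<noteq> 0"
  shows "Bterm T V W = ereal (\<Sum>y\<in>UNIV. \<Sum>x\<in>UNIV. T y * V y x * (- ln (W x y)))"
  unfolding Bterm_def sum_ereal[symmetric]
  by (intro sum.cong refl) (use assms in \<open>auto simp: Let_def\<close>)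

lemma cellD_tendsto:
  fixes q :: "nat \<Rightarrow> real"
  assumes "q \<longlonglongrightarrow> q0" "\<And>n. q n \<ge> 0" "p \<ge> 0"
  shows "(\<lambda>n. q n * ln (q n / p)) \<longlonglongrightarrow> q0 * ln (q0 / p)"
proof (cases "p = 0")
  case True then show ?thesis by simp
next
  case False
  have q0: "q0 \<ge> 0"
    by (rule LIMSEQ_le_const[OF assms(1)]) (use assms(2) in blast)
  have e: "z * ln (z / p) = z * ln z - z * ln p" if "z \<ge> 0" for z
    using that False assms(3) by (cases "z = 0") (auto simp: ln_div algebra_simps)
  have "(\<lambda>n. q n * ln (q n) - q n * ln p) \<longlonglongrightarrow> q0 * ln q0 - q0 * ln p"
    by (intro tendsto_diff xlnx_tendsto assms tendsto_mult_right)
  then show ?thesis using e[OF q0] e[OF assms(2)] by simp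
qed

lemma cellA_tendsto:
  fixes t v :: "nat \<Rightarrow> real"
  assumes "t \<longlonglongrightarrow> t0" "v \<longlonglongrightarrow> v0" "\<And>n. v n \<ge> 0" "p \<ge> 0"
  shows "(\<lambda>n. t n * v n * ln (v n / p)) \<longlonglongrightarrow> t0 * v0 * ln (v0 / p)"
proof (cases "p = 0")
  case True then show ?thesis by (simp add: assms tendsto_mult)
next
  case False
  have v0: "v0 \<ge> 0"
    by (rule LIMSEQ_le_const[OF assms(2)]) (use assms(3) in blast)
  have e: "s * z * ln (z / p) = s * (z * ln z) - s * z * ln p" if "z \<ge> 0" for s z
    using that False assms(4) by (cases "z = 0") (auto simp: ln_div algebra_simps)
  have "(\<lambda>n. t n * (v n * ln (v n)) - t n * v n * ln p) \<longlonglongrightarrow> t0 * (v0 * ln v0) - t0 * v0 * ln p"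
    by (intro tendsto_diff xlnx_tendsto assms tendsto_mult tendsto_const)
  then show ?thesis using e[OF v0] e[OF assms(3)] by simp
qed

lemma supp_limit:
  fixes q :: "nat \<Rightarrow> real"
  assumes "q \<longlonglongrightarrow> q0" "\<And>n. q n \<noteq> 0 \<longrightarrow> c"
  shows "q0 \<noteq> 0 \<longrightarrow> c"
proof (cases c)
  case False
  then have "q = (\<lambda>n. 0)" using assms(2) by auto
  then have "(\<lambda>n. 0::real) \<longlonglongrightarrow> q0" using assms(1) by simp
  then have "0 = q0" by (rule LIMSEQ_unique[OF tendsto_const])
  then show ?thesis by simp
qed auto

lemma Ffun_fin:
  assumes "Ffun P W R K T V V' \<noteq> \<infinity>"
  shows "Dterm T V P W \<noteq> \<infinity>" "Aterm T V' P \<noteq> \<infinity>" "Bterm T V' W \<noteq> \<infinity>"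
proof -
  show "Dterm T V P W \<noteq> \<infinity>"
  proof
    assume "Dterm T V P W = \<infinity>"
    then show False using assms unfolding Ffun_def by simp
  qed
  show "Aterm T V' P \<noteq> \<infinity>"
  proof
    assume "Aterm T V' P = \<infinity>"
    then show False using assms unfolding Ffun_def pospart_def by simp
  qed
  show "Bterm T V' W \<noteq> \<infinity>"
  proof
    assume "Bterm T V' W = \<infinity>"
    then show False using assms unfolding Ffun_def pospart_def by simp
  qed
qed


lemma dist_limit:
  assumes "\<And>n. is_dist (p n)" "\<And>a. (\<lambda>n. p n a) \<longlonglongrightarrow> p0 a"
  shows "is_dist p0"
proof -
  have nn: "0 \<le> p0 a" for a
  proof (rule LIMSEQ_le_const[OF assms(2)[of a]])
    show "\<exists>N. \<forall>n\<ge>N. 0 \<le> p n a" using assms(1) unfolding is_dist_def by blast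
  qed
  have "(\<lambda>n. \<Sum>a\<in>UNIV. p n a) \<longlonglongrightarrow> (\<Sum>a\<in>UNIV. p0 a)"
    by (intro tendsto_sum assms(2))
  moreover have "(\<lambda>n. \<Sum>a\<in>UNIV. p n a) = (\<lambda>n. 1::real)"
    using assms(1) unfolding is_dist_def by simp
  ultimately have "(\<lambda>n. 1::real) \<longlonglongrightarrow> (\<Sum>a\<in>UNIV. p0 a)" by simp
  then have "1 = (\<Sum>a\<in>UNIV. p0 a)" by (rule LIMSEQ_unique[OF tendsto_const])
  then show ?thesis using nn unfolding is_dist_def by simp
qed

lemma max0_ereal: "max 0 (ereal x) = ereal (max 0 x)"
  by (cases "x \<le> 0") (auto simp: max_def)

lemma Ffun_real:
  assumes "Dterm T V P W = ereal d" "Aterm T V' P = ereal a" "Bterm T V' W = ereal b"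
  shows "Ffun P W R K T V V' = ereal (d + max 0 (a - R + max 0 (b - K)))"
proof -
  have e1: "ereal b - ereal K = ereal (b - K)" by simp
  have e2: "ereal a - ereal R = ereal (a - R)" by simp
  have e3: "ereal u + ereal v = ereal (u + v)" for u v by simp
  show ?thesis unfolding Ffun_def pospart_def assms
    by (simp only: e1 e2 max0_ereal e3)
qed

theorem lemma3:
  fixes P :: "'x::finite \<Rightarrow> real" and W :: "'x \<Rightarrow> 'y::finite \<Rightarrow> real"
    and R K :: real
  assumes "is_cond W" and "is_dist P" and "R > 0" and "K > 0"
  shows "((\<lambda>\<epsilon>. Ee P W R K \<epsilon>) \<longlongrightarrow> Ee P W R K 0) (at_right 0)"
proof -
  have Pnn: "P x \<ge> 0" for x using assms(2) unfolding is_dist_def by auto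
  have Wnn: "W x y \<ge> 0" for x y using assms(1) unfolding is_cond_def is_dist_def by auto
  define S where "S e = {(T, V, V'). is_dist T \<and> is_cond V \<and> is_cond V'
        \<and> Bterm T V' W \<le> Bterm T V W + ereal e \<and> Bterm T V W + ereal e \<le> ereal K}
      \<union> {(T, V, V'). is_dist T \<and> is_cond V \<and> is_cond V'
        \<and> Bterm T V W + ereal e \<ge> ereal K}" for e :: real
  define G where "G = (\<lambda>tvv. case tvv of (T, V, V') \<Rightarrow> Ffun P W R K T V V')"
  have EeS: "Ee P W R K e = (INF t\<in>S e. G t)" for e
    unfolding Ee_def E1_def E2_def S_def G_def INF_union inf_min ..
  have Smono: "S e \<subseteq> S e'" if "e \<le> e'" for e e'
  proof
    fix t assume t: "t \<in> S e"
    obtain T V V' where tt: "t = (T, V, V')" by (cases t) auto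
    have le: "Bterm T V W + ereal e \<le> Bterm T V W + ereal e'"
      using that by (intro add_left_mono) simp
    have tv: "is_dist T" "is_cond V" "is_cond V'"
      using t unfolding S_def tt by auto
    have disj: "(Bterm T V' W \<le> Bterm T V W + ereal e \<and> Bterm T V W + ereal e \<le> ereal K)
        \<or> ereal K \<le> Bterm T V W + ereal e"
      using t unfolding S_def tt by blast
    show "t \<in> S e'"
    proof (cases "ereal K \<le> Bterm T V W + ereal e'")
      case True then show ?thesis using tv unfolding S_def tt by blast
    next
      case False
      then have lt: "Bterm T V W + ereal e' < ereal K" by simp
      then have "\<not> ereal K \<le> Bterm T V W + ereal e" using le by simp
      then have "Bterm T V' W \<le> Bterm T V W + ereal e" using disj by blast
      then have "Bterm T V' W \<le> Bterm T V W + ereal e'" using le by (rule order.trans)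
      then show ?thesis using tv lt unfolding S_def tt by auto
    qed
  qed
  have Eanti: "Ee P W R K e' \<le> Ee P W R K e" if "e \<le> e'" for e e'
    unfolding EeS by (rule INF_superset_mono[OF Smono[OF that]]) simp
  show ?thesis
  proof (rule order_tendstoI)
    fix a assume a: "Ee P W R K 0 < a"
    show "\<forall>\<^sub>F e in at_right 0. Ee P W R K e < a"
      using eventually_at_right_less[of "0::real"]
    proof eventually_elim
      case (elim e)
      have "Ee P W R K e \<le> Ee P W R K 0" by (rule Eanti) (use elim in simp)
      then show ?case using a by (rule le_less_trans)
    qed
  next
    fix a assume a: "a < Ee P W R K 0"
    show "\<forall>\<^sub>F e in at_right 0. a < Ee P W R K e"
    proof (rule ccontr)
      assume ne: "\<not> (\<forall>\<^sub>F e in at_right 0. a < Ee P W R K e)"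
      have le: "Ee P W R K e \<le> a" if "e > 0" for e :: real
      proof (rule ccontr)
        assume "\<not> Ee P W R K e \<le> a"
        then have "a < Ee P W R K e" by simp
        then have "\<forall>\<^sub>F e' in at_right 0. a < Ee P W R K e'"
          unfolding eventually_at_right_field
        proof (intro exI[of _ e] conjI allI impI)
          fix y :: real assume "0 < y" "y < e"
          have "Ee P W R K e \<le> Ee P W R K y" by (rule Eanti) (use \<open>y < e\<close> in simp)
          then show "a < Ee P W R K y" using \<open>a < Ee P W R K e\<close> by (rule order.strict_trans2[rotated])
        qed (use that in simp)
        with ne show False by simp
      qed
      obtain a' where a': "a < a'" "a' < Ee P W R K 0" using dense[OF a] by blast
      have "\<forall>n. \<exists>t. t \<in> S (inverse (real (Suc n))) \<and> G t < a'"
      proof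
        fix n
        have "(INF t\<in>S (inverse (real (Suc n))). G t) < a'"
          using le[of "inverse (real (Suc n))"] a'(1) EeS by simp
        then show "\<exists>t. t \<in> S (inverse (real (Suc n))) \<and> G t < a'" unfolding INF_less_iff by blast
      qed
      from choice[OF this] obtain tt where tt0: "\<forall>n. tt n \<in> S (inverse (real (Suc n))) \<and> G (tt n) < a'"
        by blast
      have tt: "tt n \<in> S (inverse (real (Suc n)))" "G (tt n) < a'" for n using tt0 by auto
      define T where "T n = fst (tt n)" for n
      define V where "V n = fst (snd (tt n))" for n
      define V2 where "V2 n = snd (snd (tt n))" for n
      have tteq: "tt n = (T n, V n, V2 n)" for n unfolding T_def V_def V2_def by simp
      have valid: "is_dist (T n)" "is_cond (V n)" "is_cond (V2 n)" for n
        using tt(1)[of n] unfolding tteq S_def by auto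
      have cond: "(Bterm (T n) (V2 n) W \<le> Bterm (T n) (V n) W + ereal (inverse (real (Suc n)))
          \<and> Bterm (T n) (V n) W + ereal (inverse (real (Suc n))) \<le> ereal K)
          \<or> Bterm (T n) (V n) W + ereal (inverse (real (Suc n))) \<ge> ereal K" for n
        using tt(1)[of n] unfolding tteq S_def by auto
      have Flt: "Ffun P W R K (T n) (V n) (V2 n) < a'" for n using tt(2)[of n] unfolding tteq G_def by simp
      have Ffin: "Ffun P W R K (T n) (V n) (V2 n) \<noteq> \<infinity>" for n
        using Flt[of n] a'(2) by auto
      note fins = Ffun_fin[OF Ffin]
      have suppD: "T n y * V n y x \<noteq> 0 \<longrightarrow> P x * W x y \<noteq> 0" for n y x
        using Dterm_supp[OF fins(1)] by blast
      have suppA: "T n y * V2 n y x \<noteq> 0 \<longrightarrow> P x \<noteq> 0" for n y x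
        using Aterm_supp[OF fins(2)] by blast
      have suppB2: "T n y * V2 n y x \<noteq> 0 \<longrightarrow> W x y \<noteq> 0" for n y x
        using Bterm_supp[OF fins(3)] by blast
      have suppB: "T n y * V n y x \<noteq> 0 \<longrightarrow> W x y \<noteq> 0" for n y x
        using suppD[of n y x] by auto
      define f :: "nat \<Rightarrow> 'y + ('y \<times> 'x) + ('y \<times> 'x) \<Rightarrow> real" where
        "f n z = (case z of Inl y \<Rightarrow> T n y | Inr (Inl (y, x)) \<Rightarrow> V n y x
           | Inr (Inr (y, x)) \<Rightarrow> V2 n y x)" for n z
      have vb: "T n y \<in> {0..1}" "V n y x \<in> {0..1}" "V2 n y x \<in> {0..1}" for n y x
        using valid[of n] dist_bounds unfolding is_cond_def by blast+
      have fb: "f n z \<in> {0..1}" for n z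
        using vb unfolding f_def by (auto split: sum.splits prod.splits)
      obtain r l where r: "strict_mono r" and l: "\<And>z. (\<lambda>n. f (r n) z) \<longlonglongrightarrow> l z"
        using fin_subseq[of f] fb by blast
      define T0 where "T0 y = l (Inl y)" for y
      define V0 where "V0 y x = l (Inr (Inl (y, x)))" for y x
      define V20 where "V20 y x = l (Inr (Inr (y, x)))" for y x
      have Tl: "(\<lambda>n. T (r n) y) \<longlonglongrightarrow> T0 y" for y using l[of "Inl y"] unfolding f_def T0_def by simp
      have Vl: "(\<lambda>n. V (r n) y x) \<longlonglongrightarrow> V0 y x" for y x
        using l[of "Inr (Inl (y, x))"] unfolding f_def V0_def by simp
      have V2l: "(\<lambda>n. V2 (r n) y x) \<longlonglongrightarrow> V20 y x" for y x
        using l[of "Inr (Inr (y, x))"] unfolding f_def V20_def by simp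
      have v0a: "is_dist T0" using dist_limit[of "\<lambda>n. T (r n)" T0] valid Tl by blast
      have v0b: "is_dist (V0 y)" for y
        using dist_limit[of "\<lambda>n. V (r n) y" "V0 y"] valid Vl unfolding is_cond_def by blast
      have v0c: "is_dist (V20 y)" for y
        using dist_limit[of "\<lambda>n. V2 (r n) y" "V20 y"] valid V2l unfolding is_cond_def by blast
      have valid0: "is_dist T0" "is_cond V0" "is_cond V20"
        using v0a v0b v0c unfolding is_cond_def by auto
      have Tnn: "T n y \<ge> 0" "V n y x \<ge> 0" "V2 n y x \<ge> 0" for n y x
        using valid[of n] unfolding is_cond_def is_dist_def by auto
      have qV: "(\<lambda>n. T (r n) y * V (r n) y x) \<longlonglongrightarrow> T0 y * V0 y x" for y x
        by (intro tendsto_mult Tl Vl)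
      have qV2: "(\<lambda>n. T (r n) y * V2 (r n) y x) \<longlonglongrightarrow> T0 y * V20 y x" for y x
        by (intro tendsto_mult Tl V2l)
      have suppD0: "T0 y * V0 y x \<noteq> 0 \<longrightarrow> P x * W x y \<noteq> 0" for y x
        by (rule supp_limit[OF qV]) (use suppD in auto)
      have suppA0: "T0 y * V20 y x \<noteq> 0 \<longrightarrow> P x \<noteq> 0" for y x
        by (rule supp_limit[OF qV2]) (use suppA in auto)
      have suppB20: "T0 y * V20 y x \<noteq> 0 \<longrightarrow> W x y \<noteq> 0" for y x
        by (rule supp_limit[OF qV2]) (use suppB2 in auto)
      have suppB0: "T0 y * V0 y x \<noteq> 0 \<longrightarrow> W x y \<noteq> 0" for y x
        using suppD0[of y x] by auto
      define ds where "ds n = (\<Sum>y\<in>UNIV. \<Sum>x\<in>UNIV. T n y * V n y x * ln (T n y * V n y x / (P x * W x y)))" for n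
      define d0 where "d0 = (\<Sum>y\<in>UNIV. \<Sum>x\<in>UNIV. T0 y * V0 y x * ln (T0 y * V0 y x / (P x * W x y)))"
      define as where "as n = (\<Sum>y\<in>UNIV. \<Sum>x\<in>UNIV. T n y * V2 n y x * ln (V2 n y x / P x))" for n
      define a0 where "a0 = (\<Sum>y\<in>UNIV. \<Sum>x\<in>UNIV. T0 y * V20 y x * ln (V20 y x / P x))"
      define bs where "bs n = (\<Sum>y\<in>UNIV. \<Sum>x\<in>UNIV. T n y * V n y x * (- ln (W x y)))" for n
      define b0 where "b0 = (\<Sum>y\<in>UNIV. \<Sum>x\<in>UNIV. T0 y * V0 y x * (- ln (W x y)))"
      define b2s where "b2s n = (\<Sum>y\<in>UNIV. \<Sum>x\<in>UNIV. T n y * V2 n y x * (- ln (W x y)))" for n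
      define b20 where "b20 = (\<Sum>y\<in>UNIV. \<Sum>x\<in>UNIV. T0 y * V20 y x * (- ln (W x y)))"
      have Deq: "Dterm (T n) (V n) P W = ereal (ds n)" for n
        unfolding ds_def by (rule Dterm_real) (use suppD in auto)
      have Aeq: "Aterm (T n) (V2 n) P = ereal (as n)" for n
        unfolding as_def by (rule Aterm_real) (use suppA in auto)
      have Beq: "Bterm (T n) (V n) W = ereal (bs n)" for n
        unfolding bs_def by (rule Bterm_real) (use suppB in auto)
      have B2eq: "Bterm (T n) (V2 n) W = ereal (b2s n)" for n
        unfolding b2s_def by (rule Bterm_real) (use suppB2 in auto)
      have Deq0: "Dterm T0 V0 P W = ereal d0"
        unfolding d0_def by (rule Dterm_real) (use suppD0 in auto)
      have Aeq0: "Aterm T0 V20 P = ereal a0"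
        unfolding a0_def by (rule Aterm_real) (use suppA0 in auto)
      have Beq0: "Bterm T0 V0 W = ereal b0"
        unfolding b0_def by (rule Bterm_real) (use suppB0 in auto)
      have B2eq0: "Bterm T0 V20 W = ereal b20"
        unfolding b20_def by (rule Bterm_real) (use suppB20 in auto)
      have dl: "(\<lambda>n. ds (r n)) \<longlonglongrightarrow> d0"
        unfolding ds_def d0_def
        by (intro tendsto_sum cellD_tendsto qV) (use Tnn Pnn Wnn in auto)
      have al: "(\<lambda>n. as (r n)) \<longlonglongrightarrow> a0"
        unfolding as_def a0_def
        by (intro tendsto_sum cellA_tendsto Tl V2l) (use Tnn Pnn in auto)
      have bl: "(\<lambda>n. bs (r n)) \<longlonglongrightarrow> b0"
        unfolding bs_def b0_def by (intro tendsto_sum tendsto_mult_right qV)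
      have b2l: "(\<lambda>n. b2s (r n)) \<longlonglongrightarrow> b20"
        unfolding b2s_def b20_def by (intro tendsto_sum tendsto_mult_right qV2)
      have el: "(\<lambda>n. inverse (real (Suc (r n)))) \<longlonglongrightarrow> 0"
        using LIMSEQ_subseq_LIMSEQ[OF LIMSEQ_inverse_real_of_nat r] by (simp add: o_def)
      have inS: "(T0, V0, V20) \<in> S 0"
      proof (cases "b0 \<ge> K")
        case True then show ?thesis using valid0 Beq0 unfolding S_def by auto
      next
        case False
        have "(\<lambda>n. bs (r n) + inverse (real (Suc (r n)))) \<longlonglongrightarrow> b0 + 0"
          by (intro tendsto_add bl el)
        note bel = this
        then have "\<forall>\<^sub>F n in sequentially. bs (r n) + inverse (real (Suc (r n))) < K"
          using False by (intro order_tendstoD(2)) auto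
        then have "\<forall>\<^sub>F n in sequentially. b2s (r n) \<le> bs (r n) + inverse (real (Suc (r n)))"
          proof eventually_elim
          case (elim n)
          show ?case using elim cond[of "r n"] unfolding Beq B2eq by auto
        qed
        then have "b20 \<le> b0 + 0"
          by (rule tendsto_le[OF trivial_limit_sequentially bel b2l])
        then show ?thesis using valid0 Beq0 B2eq0 False unfolding S_def by auto
      qed
      have Fn: "Ffun P W R K (T n) (V n) (V2 n) = ereal (ds n + max 0 (as n - R + max 0 (b2s n - K)))" for n
        by (rule Ffun_real[OF Deq Aeq B2eq])
      have F0: "Ffun P W R K T0 V0 V20 = ereal (d0 + max 0 (a0 - R + max 0 (b20 - K)))"
        by (rule Ffun_real[OF Deq0 Aeq0 B2eq0])
      have "(\<lambda>n. ereal (ds (r n) + max 0 (as (r n) - R + max 0 (b2s (r n) - K))))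
          \<longlonglongrightarrow> ereal (d0 + max 0 (a0 - R + max 0 (b20 - K)))"
        by (intro tendsto_ereal tendsto_add tendsto_max tendsto_diff dl al b2l tendsto_const)
      note lim = this
      have "\<forall>n. ereal (ds (r n) + max 0 (as (r n) - R + max 0 (b2s (r n) - K))) \<le> a'"
      proof
        fix n
        show "ereal (ds (r n) + max 0 (as (r n) - R + max 0 (b2s (r n) - K))) \<le> a'"
          using Flt[of "r n"] unfolding Fn by (rule less_imp_le)
      qed
      then have "ereal (d0 + max 0 (a0 - R + max 0 (b20 - K))) \<le> a'"
        by (intro tendsto_le[OF trivial_limit_sequentially tendsto_const lim] always_eventually)
      then have "G (T0, V0, V20) \<le> a'" unfolding G_def using F0 by simp
      moreover have "Ee P W R K 0 \<le> G (T0, V0, V20)" unfolding EeS by (rule INF_lower[OF inS])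
      ultimately show False using a'(2) by simp
    qed
  qed
qed

end
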